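(* Let $P$ be an APP, $I$ a linear invariant for $\mathcal{G}_P$, and $\eta$ an LRSM with respect to $I$ with constants $\epsilon\ge1$, $K,K'\le-1$. Let $\sigma$ be an $\eta$-greedy angelic scheduler, $\pi$ any demonic scheduler, $X_n:=\eta(\theta_n,\overline{\mathbf{x}}_n)$, and suppose $a<b$ are reals with $-\epsilon\in[a,b]$ such that $X_{n+1}-X_n\in[a,b]$ holds $\mathbb{P}^{\sigma,\pi}$-almost surely for all $n$. Let $W_0:=\eta(\ell_0,\mathbf{x}_0)$. Then for every integer $n>\frac{W_0}{\epsilon}+1$, \[\mathbb{P}^{\sigma,\pi}(T>n)\le\exp\Big(-\frac{2(\epsilon(n-1)-W_0)^2}{(n-1)(b-a)^2}\Big).\]
   Context: Affine probabilistic programs (APPs) and their semantics. An APP $P$ has finitely many real-valued program variables $X=\{x_1,\dots,x_{|X|}\}$ with a given initial valuation $\mathbf{x}_0\in\mathbb{R}^{|X|}$, and finitely many real-valued random variables $R$ with a fixed joint distribution $\mathcal{D}$ whose every component is integrable; a fresh sample $\mathbf{r}\sim\mathcal{D}$ is drawn at each step, independently of the past. $P$ is built from assignments $x:=e$ ($e$ an affine expression over program and random variables), skip, sequencing, while loops guarded by propositionally linear predicates (finite disjunctions of linear assertions; a linear assertion is a finite conjunction of linear constraints, each a non-strict inequality between affine expressions or its negation), and if-then-else statements whose guard is either a propositionally linear predicate or one of the keywords angel (angelic nondeterministic choice), demon (demonic nondeterministic choice), prob($p$) (then-branch taken with probability $p\in[0,1]$). $P$ is interpreted as a stochastic game structure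 $\mathcal{G}_P$: a finite set $L$ of locations partitioned into angelic, demonic, probabilistic and deterministic locations; an initial location $\ell_0$; a deterministic terminal location $\ell_{out}$ with an identity self-loop; and transitions $(\ell,f,\ell')$ with affine update functions $f:\mathbb{R}^{|X|}\times\mathbb{R}^{|R|}\to\mathbb{R}^{|X|}$. An assignment yields a deterministic location with one transition performing the update; all other transitions (control flow, and all transitions out of angelic, demonic and probabilistic locations) have the identity update $id$. Each location has at most two outgoing transitions; a probabilistic location $\ell$ carries a probability distribution $Pr_\ell$ over its outgoing transitions; each transition $\tau$ out of a deterministic location has a guard $G(\tau)$ (a propositionally linear predicate), and the guards of the transitions out of one location are mutually exclusive and jointly exhaustive. A configuration is a pair $(\ell,\mathbf{x})$. An angelic (resp. demonic) scheduler maps every finite sequence of configurations ending in an angelic (resp. demonic) location $\ell$ to a transition out of $\ell$. For an angelic scheduler $\sigma$ and demonic scheduler $\pi$, a run $c_1c_2\cdots$ is generated from $c_1=(\ell_0,\mathbf{x}_0)$: if $c_n=(\ell,\mathbf{x})$, sample $\mathbf{r}\sim\mathcal{D}$, pick a transition $(\ell,f,\ell')$ out of $\ell$ (by $\sigma$ resp. $\pi$ applied to $c_1\cdots c_n$ if $\ell$ is angelic resp. demonic; randomly according to $Pr_\ell$ if probabilistic; the unique one whose guard $\mathbf{x}$ satisfies if deterministic) and set $c_{n+1}=(\ell',f(\mathbf{x},\mathbf{r}))$. This yields a probability measure $\mathbb{P}^{\sigma,\pi}$ on runs with expectation $\mathbb{E}^{\sigma,\pi}$. Let $\theta_n$ and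 $\overline{\mathbf{x}}_n$ be the location and valuation of $c_n$, let $\mathcal{F}_n$ be the $\sigma$-algebra generated by $\theta_j,\overline{\mathbf{x}}_j$ for $j\le n$, and let $T=\min\{n:\theta_n=\ell_{out}\}$ ($\min\emptyset=\infty$) be the termination time. A configuration is reachable if it occurs on some finite path from $(\ell_0,\mathbf{x}_0)$. Linear invariants and LRSMs. A linear invariant $I$ assigns to each location $\ell$ a finite set $I(\ell)$ of linear assertions over $X$ such that every reachable configuration $(\ell,\mathbf{x})$ satisfies $\mathbf{x}\in\bigcup I(\ell)$. For $\eta:L\times\mathbb{R}^{|X|}\to\mathbb{R}$, the pre-expectation $\mathrm{pre}_\eta(\ell,\mathbf{x})$ equals $\sum_{(\ell,id,\ell')}Pr_\ell(\ell,id,\ell')\,\eta(\ell',\mathbf{x})$ if $\ell$ is probabilistic; $\max_{(\ell,id,\ell')}\eta(\ell',\mathbf{x})$ if $\ell$ is demonic; $\min_{(\ell,id,\ell')}\eta(\ell',\mathbf{x})$ if $\ell$ is angelic; and $\eta(\ell',\mathbb{E}_{\mathbf{r}\sim\mathcal{D}}f(\mathbf{x},\mathbf{r}))$ if $\ell$ is deterministic and $(\ell,f,\ell')$ is the transition whose guard $\mathbf{x}$ satisfies. A linear ranking-supermartingale map (LRSM) with respect to $I$ is a function $\eta:L\times\mathbb{R}^{|X|}\to\mathbb{R}$ for which there exist $\epsilon\ge 1$ and $K,K'\le -1$ such that for all $\ell\in L$, $\mathbf{x}\in\mathbb{R}^{|X|}$: (C1) $\eta(\ell,\cdot)$ is affine;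 (C2) if $\ell\ne\ell_{out}$ and $\mathbf{x}\in\bigcup I(\ell)$ then $\eta(\ell,\mathbf{x})\ge0$; (C3) if $\ell=\ell_{out}$ and $\mathbf{x}\in\bigcup I(\ell)$ then $K'\le\eta(\ell,\mathbf{x})\le K$; (C4) if $\ell\ne\ell_{out}$ and $\mathbf{x}\in\bigcup I(\ell)$ then $\mathrm{pre}_\eta(\ell,\mathbf{x})\le\eta(\ell,\mathbf{x})-\epsilon$. An angelic scheduler is $\eta$-greedy if, on every finite path ending in a configuration $(\ell,\mathbf{x})$ with $\ell$ angelic, it chooses a transition $(\ell,id,\ell')$ with $\eta(\ell',\mathbf{x})=\min_{(\ell,id,\ell'')}\eta(\ell'',\mathbf{x})$. *)

theory Defs
  imports "HOL-Probability.Probability"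
begin

text \<open>A linear constraint over program variables X is a non-strict inequality between affine
 expressions, normalised to  a . x <= c  (Leq a c), or its negation  not (a . x <= c)
 (NegLeq a c).\<close>

datatype 'x lcons = Leq "real^'x" real | NegLeq "real^'x" real

type_synonym 'x lassert = "'x lcons list"
type_synonym 'x lpred = "'x lassert list"

fun csat :: "'x::finite lcons \<Rightarrow> real^'x \<Rightarrow> bool" where
  "csat (Leq a c) x = (a \<bullet> x \<le> c)"
| "csat (NegLeq a c) x = (\<not> (a \<bullet> x \<le> c))"

definition asat :: "'x::finite lassert \<Rightarrow> real^'x \<Rightarrow> bool" where
  "asat A x = (\<forall>C\<in>set A. csat C x)"

definition psat :: "'x::finite lpred \<Rightarrow> real^'x \<Rightarrow> bool" where
  "psat P x = (\<exists>A\<in>set P. asat A x)"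

datatype lkind = Angelic | Demonic | Probabilistic | Deterministic

text \<open>Locations have type 'l (finite), program variables are indexed by 'x, random variables
 by 'r.  The outgoing transitions of a location l are the list trans l; transition number i
 is (f, l') with affine update f.  guard l i is the guard of transition i (used at
 deterministic locations), tprob l i its probability (used at probabilistic locations).\<close>

record ('l, 'x, 'r) sgs =
  kind :: "'l \<Rightarrow> lkind"
  init_loc :: 'l
  init_val :: "real^'x"
  out_loc :: 'l
  trans :: "'l \<Rightarrow> ((real^'x \<Rightarrow> real^'r \<Rightarrow> real^'x) \<times> 'l) list"
  guard :: "'l \<Rightarrow> nat \<Rightarrow> 'x lpred"
  tprob :: "'l \<Rightarrow> nat \<Rightarrow> real"

definition affine_upd :: "(real^'x::finite \<Rightarrow> real^'r::finite \<Rightarrow> real^'x) \<Rightarrow> bool" where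
  "affine_upd f = (\<exists>(A::real^'x^'x) (B::real^'r^'x) c. \<forall>x r. f x r = A *v x + B *v r + c)"

definition rv_dist :: "(real^'r::finite) measure \<Rightarrow> bool" where
  "rv_dist D = (prob_space D \<and> sets D = sets borel \<and> (\<forall>j. integrable D (\<lambda>r. r $ j)))"

definition wf_sgs :: "('l::finite, 'x::finite, 'r::finite) sgs \<Rightarrow> bool" where
  "wf_sgs G = (
     (\<forall>l. 1 \<le> length (trans G l) \<and> length (trans G l) \<le> 2)
   \<and> (\<forall>l i. i < length (trans G l) \<longrightarrow> affine_upd (fst (trans G l ! i)))
   \<and> (\<forall>l i. kind G l \<noteq> Deterministic \<and> i < length (trans G l) \<longrightarrow>
           fst (trans G l ! i) = (\<lambda>x r. x))
   \<and> kind G (out_loc G) = Deterministic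
   \<and> trans G (out_loc G) = [((\<lambda>x r. x), out_loc G)]
   \<and> (\<forall>l. kind G l = Probabilistic \<longrightarrow>
           (\<forall>i < length (trans G l). 0 \<le> tprob G l i)
         \<and> (\<Sum>i<length (trans G l). tprob G l i) = 1)
   \<and> (\<forall>l x. kind G l = Deterministic \<longrightarrow>
           (\<exists>!i. i < length (trans G l) \<and> psat (guard G l i) x)))"

type_synonym ('l, 'x) config = "'l \<times> (real^'x)"

definition dsupp :: "(real^'r::finite) measure \<Rightarrow> (real^'r) set" where
  "dsupp D = {r. \<forall>U. open U \<and> r \<in> U \<longrightarrow> emeasure D U > 0}"

definition gstep :: "('l::finite, 'x::finite, 'r::finite) sgs \<Rightarrow> (real^'r) measure
     \<Rightarrow> ('l, 'x) config \<Rightarrow> ('l, 'x) config \<Rightarrow> bool" where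
  "gstep G D c c' = (\<exists>i r. i < length (trans G (fst c)) \<and> r \<in> dsupp D
      \<and> (kind G (fst c) = Deterministic \<longrightarrow> psat (guard G (fst c) i) (snd c))
      \<and> (kind G (fst c) = Probabilistic \<longrightarrow> tprob G (fst c) i > 0)
      \<and> c' = (snd (trans G (fst c) ! i), fst (trans G (fst c) ! i) (snd c) r))"

definition is_path :: "('l::finite, 'x::finite, 'r::finite) sgs \<Rightarrow> (real^'r) measure
     \<Rightarrow> ('l, 'x) config list \<Rightarrow> bool" where
  "is_path G D h = (h \<noteq> [] \<and> hd h = (init_loc G, init_val G)
      \<and> (\<forall>i. Suc i < length h \<longrightarrow> gstep G D (h ! i) (h ! Suc i)))"

definition reachable :: "('l::finite, 'x::finite, 'r::finite) sgs \<Rightarrow> (real^'r) measure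
     \<Rightarrow> ('l, 'x) config \<Rightarrow> bool" where
  "reachable G D c = (\<exists>h. is_path G D h \<and> last h = c)"

definition inv_sat :: "('l \<Rightarrow> 'x::finite lassert list) \<Rightarrow> 'l \<Rightarrow> real^'x \<Rightarrow> bool" where
  "inv_sat I l x = (\<exists>A\<in>set (I l). asat A x)"

definition linear_invariant :: "('l::finite, 'x::finite, 'r::finite) sgs \<Rightarrow> (real^'r) measure
     \<Rightarrow> ('l \<Rightarrow> 'x lassert list) \<Rightarrow> bool" where
  "linear_invariant G D I = (\<forall>l x. reachable G D (l, x) \<longrightarrow> inv_sat I l x)"

definition det_idx :: "('l::finite, 'x::finite, 'r::finite) sgs \<Rightarrow> 'l \<Rightarrow> real^'x \<Rightarrow> nat" where
  "det_idx G l x = (SOME i. i < length (trans G l) \<and> psat (guard G l i) x)"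

definition pre_eta :: "('l::finite, 'x::finite, 'r::finite) sgs \<Rightarrow> (real^'r) measure
     \<Rightarrow> ('l \<Rightarrow> real^'x \<Rightarrow> real) \<Rightarrow> 'l \<Rightarrow> real^'x \<Rightarrow> real" where
  "pre_eta G D \<eta> l x = (case kind G l of
      Probabilistic \<Rightarrow> (\<Sum>i<length (trans G l). tprob G l i * \<eta> (snd (trans G l ! i)) x)
    | Demonic \<Rightarrow> Max {\<eta> (snd t) x | t. t \<in> set (trans G l)}
    | Angelic \<Rightarrow> Min {\<eta> (snd t) x | t. t \<in> set (trans G l)}
    | Deterministic \<Rightarrow>
        (let (f, l') = trans G l ! det_idx G l x
         in \<eta> l' (\<chi> j. \<integral>r. (f x r) $ j \<partial>D)))"

definition is_lrsm :: "('l::finite, 'x::finite, 'r::finite) sgs \<Rightarrow> (real^'r) measure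
     \<Rightarrow> ('l \<Rightarrow> 'x lassert list) \<Rightarrow> ('l \<Rightarrow> real^'x \<Rightarrow> real) \<Rightarrow> real \<Rightarrow> real \<Rightarrow> real \<Rightarrow> bool" where
  "is_lrsm G D I \<eta> \<epsilon> K K' = (\<epsilon> \<ge> 1 \<and> K \<le> -1 \<and> K' \<le> -1
     \<and> (\<forall>l. \<exists>a c. \<forall>x. \<eta> l x = a \<bullet> x + c)
     \<and> (\<forall>l x. l \<noteq> out_loc G \<and> inv_sat I l x \<longrightarrow> \<eta> l x \<ge> 0)
     \<and> (\<forall>x. inv_sat I (out_loc G) x \<longrightarrow> K' \<le> \<eta> (out_loc G) x \<and> \<eta> (out_loc G) x \<le> K)
     \<and> (\<forall>l x. l \<noteq> out_loc G \<and> inv_sat I l x \<longrightarrow> pre_eta G D \<eta> l x \<le> \<eta> l x - \<epsilon>))"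

text \<open>A scheduler maps a finite (chronological, nonempty) sequence of configurations to the
 index of a transition out of the location of its last configuration.\<close>
definition scheduler :: "('l::finite, 'x::finite, 'r::finite) sgs \<Rightarrow> lkind
     \<Rightarrow> (('l, 'x) config list \<Rightarrow> nat) \<Rightarrow> bool" where
  "scheduler G k s = (\<forall>h. h \<noteq> [] \<and> kind G (fst (last h)) = k \<longrightarrow>
       s h < length (trans G (fst (last h))))"

definition greedy :: "('l::finite, 'x::finite, 'r::finite) sgs \<Rightarrow> (real^'r) measure
     \<Rightarrow> ('l \<Rightarrow> real^'x \<Rightarrow> real) \<Rightarrow> (('l, 'x) config list \<Rightarrow> nat) \<Rightarrow> bool" where
  "greedy G D \<eta> \<sigma> = (\<forall>h l x. is_path G D h \<and> last h = (l, x) \<and> kind G l = Angelic \<longrightarrow>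
       \<eta> (snd (trans G l ! \<sigma> h)) x = Min {\<eta> (snd t) x | t. t \<in> set (trans G l)})"

text \<open>The randomness of a run: a stream of i.i.d. pairs (r, u), r ~ D the sample of the
 random variables and u uniform on [0,1] used to resolve probabilistic branching
 (transition 0 is taken iff u < tprob l 0).\<close>
definition step_space :: "(real^'r::finite) measure \<Rightarrow> ((real^'r) \<times> real) measure" where
  "step_space D = D \<Otimes>\<^sub>M uniform_measure lborel {0..1}"

definition run_space :: "(real^'r::finite) measure \<Rightarrow> ((real^'r) \<times> real) stream measure" where
  "run_space D = stream_space (step_space D)"

definition choice :: "('l::finite, 'x::finite, 'r::finite) sgs
     \<Rightarrow> (('l, 'x) config list \<Rightarrow> nat) \<Rightarrow> (('l, 'x) config list \<Rightarrow> nat)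
     \<Rightarrow> ('l, 'x) config list \<Rightarrow> real \<Rightarrow> nat" where
  "choice G \<sigma> \<pi> h u = (let (l, x) = last h in case kind G l of
       Angelic \<Rightarrow> \<sigma> h
     | Demonic \<Rightarrow> \<pi> h
     | Probabilistic \<Rightarrow> (if u < tprob G l 0 then 0 else length (trans G l) - 1)
     | Deterministic \<Rightarrow> det_idx G l x)"

text \<open>hist n = [c_1, ..., c_(n+1)].\<close>
fun hist :: "('l::finite, 'x::finite, 'r::finite) sgs
     \<Rightarrow> (('l, 'x) config list \<Rightarrow> nat) \<Rightarrow> (('l, 'x) config list \<Rightarrow> nat)
     \<Rightarrow> ((real^'r) \<times> real) stream \<Rightarrow> nat \<Rightarrow> ('l, 'x) config list" where
  "hist G \<sigma> \<pi> \<omega> 0 = [(init_loc G, init_val G)]"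
| "hist G \<sigma> \<pi> \<omega> (Suc n) =
     (let h = hist G \<sigma> \<pi> \<omega> n; (l, x) = last h; (r, u) = \<omega> !! n;
          (f, l') = trans G l ! choice G \<sigma> \<pi> h u
      in h @ [(l', f x r)])"

text \<open>The n-th configuration c_n of the run (n >= 1; c_0 is set to c_1 and never used).\<close>
definition cfg :: "('l::finite, 'x::finite, 'r::finite) sgs
     \<Rightarrow> (('l, 'x) config list \<Rightarrow> nat) \<Rightarrow> (('l, 'x) config list \<Rightarrow> nat)
     \<Rightarrow> ((real^'r) \<times> real) stream \<Rightarrow> nat \<Rightarrow> ('l, 'x) config" where
  "cfg G \<sigma> \<pi> \<omega> n = last (hist G \<sigma> \<pi> \<omega> (n - 1))"

definition term_time :: "('l::finite, 'x::finite, 'r::finite) sgs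
     \<Rightarrow> (('l, 'x) config list \<Rightarrow> nat) \<Rightarrow> (('l, 'x) config list \<Rightarrow> nat)
     \<Rightarrow> ((real^'r) \<times> real) stream \<Rightarrow> enat" where
  "term_time G \<sigma> \<pi> \<omega> = (if \<exists>n\<ge>1. fst (cfg G \<sigma> \<pi> \<omega> n) = out_loc G
      then enat (LEAST n. n \<ge> 1 \<and> fst (cfg G \<sigma> \<pi> \<omega> n) = out_loc G) else \<infinity>)"

end

theory Submission
  imports Defs
begin



locale ctx =
  fixes G :: "('l::finite, 'x::finite, 'r::finite) sgs"
    and D :: "(real^'r) measure"
    and I :: "'l \<Rightarrow> 'x lassert list"
    and \<eta> :: "'l \<Rightarrow> real^'x \<Rightarrow> real"
    and \<epsilon> K K' :: real
    and \<sigma> \<pi> :: "('l, 'x) config list \<Rightarrow> nat"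
  assumes wf: "wf_sgs G" and rv: "rv_dist D"
    and linv: "linear_invariant G D I"
    and lrsm: "is_lrsm G D I \<eta> \<epsilon> K K'"
    and sa: "scheduler G Angelic \<sigma>" and gr: "greedy G D \<eta> \<sigma>"
    and sd: "scheduler G Demonic \<pi>"
    and meas: "\<forall>k. (\<lambda>\<omega>. cfg G \<sigma> \<pi> \<omega> k) \<in> run_space D \<rightarrow>\<^sub>M (count_space UNIV \<Otimes>\<^sub>M borel)"
begin

abbreviation "U \<equiv> uniform_measure lborel {0..1::real}"
abbreviation "M \<equiv> step_space D"
abbreviation "S \<equiv> run_space D"

lemma probD: "prob_space D" using rv by (simp add: rv_dist_def)
lemma setsD: "sets D = sets borel" using rv by (simp add: rv_dist_def)
lemma spaceD: "space D = UNIV" using sets_eq_imp_space_eq[OF setsD] by simp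
lemma probU: "prob_space U" by (rule prob_space_uniform_measure) auto
lemma probM: "prob_space M" unfolding step_space_def by (rule prob_space_pair[OF probD probU])
lemma spaceM: "space M = UNIV" unfolding step_space_def by (simp add: space_pair_measure spaceD)
lemma probS: "prob_space S" unfolding run_space_def by (rule prob_space.prob_space_stream_space[OF probM])
lemma spaceS: "space S = UNIV" unfolding run_space_def by (simp add: space_stream_space spaceM)

definition ext :: "('l, 'x) config list \<Rightarrow> (real^'r) \<times> real \<Rightarrow> ('l, 'x) config list" where
  "ext h x = (let (l, y) = last h; (r, u) = x; (f, l') = trans G l ! choice G \<sigma> \<pi> h u
      in h @ [(l', f y r)])"

lemma hist_Suc: "hist G \<sigma> \<pi> \<omega> (Suc n) = ext (hist G \<sigma> \<pi> \<omega> n) (\<omega> !! n)"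
  by (simp add: ext_def Let_def split: prod.splits)

lemma length_hist: "length (hist G \<sigma> \<pi> \<omega> n) = Suc n"
  by (induct n) (simp_all add: hist_Suc ext_def Let_def split: prod.splits)

lemma hist_prefix: "n \<le> length p \<Longrightarrow> hist G \<sigma> \<pi> (p @- \<omega>) n = hist G \<sigma> \<pi> (p @- \<omega>') n"
  by (induct n) (simp_all add: hist_Suc)


definition good :: "(real^'r) \<times> real \<Rightarrow> bool" where
  "good x = (fst x \<in> dsupp D \<and> snd x \<in> {0..<1})"

lemma wf_len: "1 \<le> length (trans G l)" "length (trans G l) \<le> 2" using wf by (auto simp: wf_sgs_def)
lemma wf_id: "kind G l \<noteq> Deterministic \<Longrightarrow> i < length (trans G l) \<Longrightarrow> fst (trans G l ! i) = (\<lambda>x r. x)"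
  using wf by (auto simp: wf_sgs_def)
lemma wf_out: "kind G (out_loc G) = Deterministic" "trans G (out_loc G) = [((\<lambda>x r. x), out_loc G)]"
  using wf by (auto simp: wf_sgs_def)
lemma wf_prob: "kind G l = Probabilistic \<Longrightarrow> i < length (trans G l) \<Longrightarrow> 0 \<le> tprob G l i"
  "kind G l = Probabilistic \<Longrightarrow> (\<Sum>i<length (trans G l). tprob G l i) = 1"
  using wf by (auto simp: wf_sgs_def)
lemma wf_det: "kind G l = Deterministic \<Longrightarrow> \<exists>!i. i < length (trans G l) \<and> psat (guard G l i) x"
  using wf by (auto simp: wf_sgs_def)

lemma det_idx: "kind G l = Deterministic \<Longrightarrow> det_idx G l x < length (trans G l) \<and> psat (guard G l (det_idx G l x)) x"
  unfolding det_idx_def by (rule someI_ex) (use wf_det in blast)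

lemma choice_lt: "h \<noteq> [] \<Longrightarrow> last h = (l, y) \<Longrightarrow> choice G \<sigma> \<pi> h u < length (trans G l)"
  using sa sd wf_len[of l] det_idx[of l y]
  by (auto simp: choice_def scheduler_def split: lkind.splits)

lemma choice_prob: "h \<noteq> [] \<Longrightarrow> last h = (l, y) \<Longrightarrow> kind G l = Probabilistic \<Longrightarrow> u \<in> {0..<1}
   \<Longrightarrow> tprob G l (choice G \<sigma> \<pi> h u) > 0"
proof -
  assume h: "h \<noteq> []" "last h = (l, y)" and k: "kind G l = Probabilistic" and u: "u \<in> {0..<1}"
  have s: "(\<Sum>i<length (trans G l). tprob G l i) = 1" using wf_prob(2)[OF k] .
  have nn: "0 \<le> tprob G l 1" if "1 < length (trans G l)" using wf_prob(1)[OF k that] .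
  show ?thesis
  proof (cases "u < tprob G l 0")
    case True then show ?thesis using h k u by (auto simp: choice_def)
  next
    case False
    have "length (trans G l) = 1 \<or> length (trans G l) = 2" using wf_len[of l] by auto
    then show ?thesis
    proof
      assume L: "length (trans G l) = 1"
      then have "tprob G l 0 = 1" using s by simp
      then show ?thesis using h k False L by (auto simp: choice_def)
    next
      assume L: "length (trans G l) = 2"
      then have "tprob G l 0 + tprob G l 1 = 1" using s by (simp add: numeral_2_eq_2)
      then show ?thesis using h k False L u by (auto simp: choice_def)
    qed
  qed
qed

lemma gstep_ext: "h \<noteq> [] \<Longrightarrow> good x \<Longrightarrow> gstep G D (last h) (last (ext h x))"
proof -
  assume h: "h \<noteq> []" and g: "good x"
  obtain l y where ly: "last h = (l, y)" by (cases "last h")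
  obtain r u where x: "x = (r, u)" by (cases x)
  define i where "i = choice G \<sigma> \<pi> h u"
  have il: "i < length (trans G l)" unfolding i_def by (rule choice_lt[OF h ly])
  have "kind G l = Deterministic \<Longrightarrow> i = det_idx G l y" by (simp add: i_def choice_def ly)
  then have dg: "kind G l = Deterministic \<longrightarrow> psat (guard G l i) y" using det_idx by auto
  have pp: "kind G l = Probabilistic \<longrightarrow> tprob G l i > 0" unfolding i_def
    using choice_prob[OF h ly] g x by (auto simp: good_def)
  have lst: "last (ext h x) = (snd (trans G l ! i), fst (trans G l ! i) y r)"
    by (simp add: ext_def ly x i_def Let_def split: prod.splits)
  show ?thesis unfolding gstep_def ly lst fst_conv snd_conv
    using il dg pp g x by (auto simp: good_def)
qed

lemma last_ext: "last (ext h x) \<in> set (ext h x)" "butlast (ext h x) = h"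
  by (simp_all add: ext_def Let_def split: prod.splits)

lemma ext_app: "\<exists>c. ext h x = h @ [c]"
  by (simp add: ext_def Let_def split: prod.splits)

lemma path_hist: "(\<forall>k<n. good (\<omega> !! k)) \<Longrightarrow> is_path G D (hist G \<sigma> \<pi> \<omega> n)"
proof (induct n)
  case 0 then show ?case by (simp add: is_path_def)
next
  case (Suc n)
  let ?h = "hist G \<sigma> \<pi> \<omega> n"
  have P: "is_path G D ?h" using Suc by auto
  have ne: "?h \<noteq> []" using P by (simp add: is_path_def)
  obtain c where c: "ext ?h (\<omega> !! n) = ?h @ [c]" using ext_app by blast
  have gs: "gstep G D (last ?h) c"
    using gstep_ext[OF ne, of "\<omega> !! n"] Suc.prems c by simp
  have lh: "length ?h = Suc n" by (rule length_hist)
  show ?case unfolding hist_Suc c is_path_def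
  proof (intro conjI allI impI)
    show "?h @ [c] \<noteq> []" by simp
    show "hd (?h @ [c]) = (init_loc G, init_val G)" using P ne by (simp add: is_path_def)
    fix i assume i: "Suc i < length (?h @ [c])"
    show "gstep G D ((?h @ [c]) ! i) ((?h @ [c]) ! Suc i)"
    proof (cases "Suc i < length ?h")
      case True then show ?thesis using P by (simp add: nth_append is_path_def)
    next
      case False
      then have "i = n" using i lh by simp
      then show ?thesis using gs lh ne by (simp add: nth_append last_conv_nth)
    qed
  qed
qed

end


context ctx begin

lemma lrsm_eps: "\<epsilon> \<ge> 1" using lrsm by (simp add: is_lrsm_def)
lemma lrsm_aff: "\<exists>a c. \<forall>x. \<eta> l x = a \<bullet> x + c" using lrsm by (simp add: is_lrsm_def)
lemma lrsm_C2: "l \<noteq> out_loc G \<Longrightarrow> inv_sat I l x \<Longrightarrow> \<eta> l x \<ge> 0" using lrsm by (simp add: is_lrsm_def)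
lemma lrsm_C4: "l \<noteq> out_loc G \<Longrightarrow> inv_sat I l x \<Longrightarrow> pre_eta G D \<eta> l x \<le> \<eta> l x - \<epsilon>"
  using lrsm by (simp add: is_lrsm_def)

lemma path_inv: "is_path G D h \<Longrightarrow> last h = (l, y) \<Longrightarrow> inv_sat I l y"
  using linv unfolding linear_invariant_def reachable_def by blast

lemma out_stay: "h \<noteq> [] \<Longrightarrow> fst (last h) = out_loc G \<Longrightarrow> last (ext h x) = last h"
proof -
  assume h: "h \<noteq> []" and o: "fst (last h) = out_loc G"
  obtain l y where ly: "last h = (l, y)" by (cases "last h")
  obtain r u where x: "x = (r, u)" by (cases x)
  have l: "l = out_loc G" using o ly by simp
  have "choice G \<sigma> \<pi> h u < length (trans G l)" by (rule choice_lt[OF h ly])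
  then have "choice G \<sigma> \<pi> h u = 0" using l wf_out by simp
  then show ?thesis using l wf_out ly x by (simp add: ext_def Let_def)
qed

lemma distr_snd: "distr M U snd = U"
proof (rule measure_eqI)
  show "sets (distr M U snd) = sets U" by simp
  fix A assume A: "A \<in> sets (distr M U snd)"
  then have A': "A \<in> sets U" by simp
  have "emeasure (distr M U snd) A = emeasure M (space D \<times> A)"
    using A' unfolding step_space_def
    by (subst emeasure_distr) (auto simp: space_pair_measure spaceD intro!: arg_cong2[where f=emeasure] dest: sets.sets_into_space)
  also have "\<dots> = emeasure D (space D) * emeasure U A"
    unfolding step_space_def
    by (rule sigma_finite_measure.emeasure_pair_measure_Times[OF prob_space_imp_sigma_finite[OF probU]])
       (rule sets.top, rule A')
  also have "\<dots> = emeasure U A" using prob_space.emeasure_space_1[OF probD] by simp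
  finally show "emeasure (distr M U snd) A = emeasure U A" .
qed

lemma distr_fst: "distr M D fst = D"
  unfolding step_space_def by (rule prob_space.distr_pair_fst[OF probU])

lemma int_fst: fixes g :: "real^'r \<Rightarrow> real" assumes "integrable D g"
  shows "integrable M (\<lambda>x. g (fst x))" "(\<integral>x. g (fst x) \<partial>M) = (\<integral>r. g r \<partial>D)"
proof -
  have m: "fst \<in> M \<rightarrow>\<^sub>M D" unfolding step_space_def by simp
  have gm: "g \<in> borel_measurable D" using assms by simp
  have "integrable (distr M D fst) g \<longleftrightarrow> integrable M (\<lambda>x. g (fst x))"
    by (rule integrable_distr_eq) (use m gm in auto)
  then show "integrable M (\<lambda>x. g (fst x))"
    using assms distr_fst by simp
  show "(\<integral>x. g (fst x) \<partial>M) = (\<integral>r. g r \<partial>D)"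
  proof -
    have "integral\<^sup>L (distr M D fst) g = (\<integral>x. g (fst x) \<partial>M)"
      by (rule integral_distr) (use m gm in auto)
    then show ?thesis using distr_fst by simp
  qed
qed

lemma int_snd: fixes g :: "real \<Rightarrow> real" assumes "integrable U g"
  shows "integrable M (\<lambda>x. g (snd x))" "(\<integral>x. g (snd x) \<partial>M) = (\<integral>r. g r \<partial>U)"
proof -
  have m: "snd \<in> M \<rightarrow>\<^sub>M U" unfolding step_space_def by simp
  have gm: "g \<in> borel_measurable U" using assms by simp
  have "integrable (distr M U snd) g \<longleftrightarrow> integrable M (\<lambda>x. g (snd x))"
    by (rule integrable_distr_eq) (use m gm in auto)
  then show "integrable M (\<lambda>x. g (snd x))"
    using assms distr_snd by simp
  show "(\<integral>x. g (snd x) \<partial>M) = (\<integral>r. g r \<partial>U)"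
  proof -
    have "integral\<^sup>L (distr M U snd) g = (\<integral>x. g (snd x) \<partial>M)"
      by (rule integral_distr) (use m gm in auto)
    then show ?thesis using distr_snd by simp
  qed
qed

lemma int_constM: "integrable M (\<lambda>x. c::real)" "(\<integral>x. c \<partial>M) = c"
proof -
  interpret P: prob_space M by (rule probM)
  show "integrable M (\<lambda>x. c::real)" by simp
  show "(\<integral>x. c \<partial>M) = c" by (simp add: P.prob_space)
qed

end


context ctx begin

lemma int_aff:
  fixes F :: "real^'r \<Rightarrow> real^'x"
  assumes F: "\<And>j. integrable D (\<lambda>r. F r $ j)"
  shows "integrable D (\<lambda>r. a \<bullet> F r + c)" "(\<integral>r. a \<bullet> F r + c \<partial>D) = a \<bullet> (\<chi> j. \<integral>r. F r $ j \<partial>D) + c"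
proof -
  interpret P: prob_space D by (rule probD)
  have e: "\<And>r. a \<bullet> F r + c = (\<Sum>j\<in>UNIV. a $ j * F r $ j) + c" by (simp add: inner_vec_def)
  have i1: "integrable D (\<lambda>r. \<Sum>j\<in>UNIV. a $ j * F r $ j)" using F by auto
  show "integrable D (\<lambda>r. a \<bullet> F r + c)" unfolding e using i1 by auto
  have "(\<integral>r. a \<bullet> F r + c \<partial>D) = (\<integral>r. (\<Sum>j\<in>UNIV. a $ j * F r $ j) \<partial>D) + c"
    unfolding e using i1 by (simp add: P.prob_space)
  also have "(\<integral>r. (\<Sum>j\<in>UNIV. a $ j * F r $ j) \<partial>D) = (\<Sum>j\<in>UNIV. a $ j * (\<integral>r. F r $ j \<partial>D))"
    using F by (simp add: integral_sum)
  finally show "(\<integral>r. a \<bullet> F r + c \<partial>D) = a \<bullet> (\<chi> j. \<integral>r. F r $ j \<partial>D) + c"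
    by (simp add: inner_vec_def)
qed

lemma int_upd: "affine_upd f \<Longrightarrow> integrable D (\<lambda>r. f y r $ j)"
proof -
  assume "affine_upd f"
  then obtain A B c where f: "\<And>x r. f x r = A *v x + B *v r + c" unfolding affine_upd_def by blast
  have ir: "\<And>i. integrable D (\<lambda>r. r $ i)" using rv by (simp add: rv_dist_def)
  have e: "\<And>r. f y r $ j = (A *v y) $ j + (\<Sum>i\<in>UNIV. B $ j $ i * r $ i) + c $ j"
    by (simp add: f matrix_vector_mult_def)
  interpret P: prob_space D by (rule probD)
  show ?thesis unfolding e using ir by (intro Bochner_Integration.integrable_add) auto
qed

definition evl :: "('l, 'x) config \<Rightarrow> real" where "evl c = \<eta> (fst c) (snd c)"

lemma step_exp:
  assumes P: "is_path G D h" and ly: "last h = (l, y)" and nout: "l \<noteq> out_loc G"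
  shows "integrable M (\<lambda>x. evl (last (ext h x)))"
    "(\<integral>x. evl (last (ext h x)) \<partial>M) \<le> \<eta> l y - \<epsilon>"
proof -
  have h: "h \<noteq> []" using P by (simp add: is_path_def)
  have lx: "\<And>r u. last (ext h (r, u)) = (snd (trans G l ! choice G \<sigma> \<pi> h u), fst (trans G l ! choice G \<sigma> \<pi> h u) y r)"
    by (simp add: ext_def ly Let_def split: prod.splits)
  have C4: "pre_eta G D \<eta> l y \<le> \<eta> l y - \<epsilon>" using lrsm_C4[OF nout path_inv[OF P ly]] .
  have "\<exists>v. integrable M (\<lambda>x. evl (last (ext h x))) \<and> (\<integral>x. evl (last (ext h x)) \<partial>M) = v \<and> v \<le> pre_eta G D \<eta> l y"
  proof (cases "kind G l")
    case Angelic
    define i where "i = \<sigma> h"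
    have il: "i < length (trans G l)" using sa h ly Angelic unfolding scheduler_def i_def by (metis fst_conv)
    have ch: "\<And>u. choice G \<sigma> \<pi> h u = i" using Angelic ly by (simp add: choice_def i_def)
    have idf: "fst (trans G l ! i) = (\<lambda>x r. x)" using wf_id[of l i] Angelic il by simp
    have "\<eta> (snd (trans G l ! i)) y = Min {\<eta> (snd t) y | t. t \<in> set (trans G l)}"
      using gr P ly Angelic unfolding greedy_def i_def by blast
    then have v: "\<And>x. evl (last (ext h x)) = pre_eta G D \<eta> l y"
      using Angelic by (auto simp: evl_def lx ch idf pre_eta_def)
    show ?thesis unfolding v by (metis int_constM order_refl)
  next
    case Demonic
    define i where "i = \<pi> h"
    have il: "i < length (trans G l)" using sd h ly Demonic unfolding scheduler_def i_def by (metis fst_conv)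
    have ch: "\<And>u. choice G \<sigma> \<pi> h u = i" using Demonic ly by (simp add: choice_def i_def)
    have idf: "fst (trans G l ! i) = (\<lambda>x r. x)" using wf_id[of l i] Demonic il by simp
    have fe: "{\<eta> (snd t) y | t. t \<in> set (trans G l)} = (\<lambda>t. \<eta> (snd t) y) ` set (trans G l)" by blast
    have fin: "finite {\<eta> (snd t) y | t. t \<in> set (trans G l)}" unfolding fe by simp
    have "\<eta> (snd (trans G l ! i)) y \<le> Max {\<eta> (snd t) y | t. t \<in> set (trans G l)}"
      by (rule Max_ge[OF fin]) (use il nth_mem in blast)
    then have v: "\<And>x. evl (last (ext h x)) = \<eta> (snd (trans G l ! i)) y"
      "\<eta> (snd (trans G l ! i)) y \<le> pre_eta G D \<eta> l y"
      using Demonic by (auto simp: evl_def lx ch idf pre_eta_def)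
    show ?thesis unfolding v(1) by (metis int_constM v(2))
  next
    case Probabilistic
    define p where "p = tprob G l 0"
    define n where "n = length (trans G l)"
    define A where "A = \<eta> (snd (trans G l ! 0)) y"
    define B where "B = \<eta> (snd (trans G l ! (n - 1))) y"
    have n12: "n = 1 \<or> n = 2" using wf_len[of l] by (auto simp: n_def)
    have s: "(\<Sum>i<n. tprob G l i) = 1" using wf_prob(2)[OF Probabilistic] by (simp add: n_def)
    have p0: "0 \<le> p" using wf_prob(1)[OF Probabilistic, of 0] wf_len[of l] unfolding p_def by (metis One_nat_def Suc_le_lessD)
    have p1: "p \<le> 1" "n = 2 \<Longrightarrow> tprob G l 1 = 1 - p"
    proof -
      have "n = 2 \<Longrightarrow> 0 \<le> tprob G l 1" using wf_prob(1)[OF Probabilistic, of 1] by (auto simp: n_def)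
      then show "p \<le> 1" using n12 s by (auto simp: p_def numeral_2_eq_2)
      show "n = 2 \<Longrightarrow> tprob G l 1 = 1 - p" using s by (simp add: p_def numeral_2_eq_2)
    qed
    have pre: "pre_eta G D \<eta> l y = p * A + (1 - p) * B"
    proof -
      have "pre_eta G D \<eta> l y = (\<Sum>i<n. tprob G l i * \<eta> (snd (trans G l ! i)) y)"
        using Probabilistic by (simp add: pre_eta_def n_def)
      note e = this
      from n12 show ?thesis
      proof
        assume n1: "n = 1"
        then show ?thesis using e s by (simp add: A_def B_def p_def algebra_simps)
      next
        assume n2: "n = 2"
        have "pre_eta G D \<eta> l y = p * A + tprob G l 1 * B"
          using e n2 by (simp add: A_def B_def p_def numeral_2_eq_2)
        then show ?thesis using p1(2)[OF n2] by simp
      qed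
    qed
    define g where "g = (\<lambda>u::real. B + (A - B) * indicator {..<p} u)"
    have idf: "\<And>u. fst (trans G l ! choice G \<sigma> \<pi> h u) = (\<lambda>x r. x)"
      using wf_id choice_lt[OF h ly] Probabilistic by simp
    have v: "\<And>x. evl (last (ext h x)) = g (snd x)"
    proof -
      fix x :: "(real^'r) \<times> real" obtain r u where x: "x = (r, u)" by (cases x)
      show "evl (last (ext h x)) = g (snd x)"
        unfolding x evl_def lx idf fst_conv snd_conv
        using Probabilistic ly by (auto simp: g_def choice_def A_def B_def p_def n_def)
    qed
    interpret PU: prob_space U by (rule probU)
    have sU: "{..<p} \<in> sets U" by simp
    have ii: "integrable U (indicator {..<p} :: real \<Rightarrow> real)"
      by (rule integrable_real_indicator[OF sU]) (metis PU.emeasure_finite infinity_ennreal_def less_top)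
    have ig: "integrable U g" unfolding g_def using ii by simp
    have mU: "measure U {..<p} = p"
    proof -
      have "measure U {..<p} = measure lborel ({0..1} \<inter> {..<p}) / measure lborel {0..1::real}"
        by (subst measure_uniform_measure) auto
      also have "{0..1} \<inter> {..<p} = {0..<p}" using p1 by auto
      finally show ?thesis using p0 by simp
    qed
    have "(\<integral>u. g u \<partial>U) = B + (A - B) * p"
      unfolding g_def using sU ii by (subst Bochner_Integration.integral_add) (auto simp: PU.prob_space mU)
    then have "(\<integral>u. g u \<partial>U) = pre_eta G D \<eta> l y" unfolding pre by (simp add: algebra_simps)
    then show ?thesis unfolding v using int_snd[OF ig] by auto
  next
    case Deterministic
    define i where "i = det_idx G l y"
    obtain f l' where fl: "trans G l ! i = (f, l')" by (cases "trans G l ! i")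
    have il: "i < length (trans G l)" using det_idx[OF Deterministic] by (simp add: i_def)
    have af: "affine_upd f" using wf fl il unfolding wf_sgs_def by (metis fst_conv)
    obtain a c where ac: "\<And>z. \<eta> l' z = a \<bullet> z + c" using lrsm_aff[of l'] by blast
    have ch: "\<And>u. choice G \<sigma> \<pi> h u = i" using Deterministic ly by (simp add: choice_def i_def)
    have v: "\<And>x. evl (last (ext h x)) = a \<bullet> f y (fst x) + c"
    proof -
      fix x :: "(real^'r) \<times> real" obtain r u where x: "x = (r, u)" by (cases x)
      show "evl (last (ext h x)) = a \<bullet> f y (fst x) + c" by (simp add: x evl_def lx ch fl ac)
    qed
    have pre: "pre_eta G D \<eta> l y = a \<bullet> (\<chi> j. \<integral>r. f y r $ j \<partial>D) + c"
      using Deterministic by (simp add: pre_eta_def fl ac i_def[symmetric])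
    note ia = int_aff[of "f y", OF int_upd[OF af], of a c]
    show ?thesis unfolding v using int_fst[OF ia(1)] ia(2) pre by auto
  qed
  then obtain v where "integrable M (\<lambda>x. evl (last (ext h x)))" "(\<integral>x. evl (last (ext h x)) \<partial>M) = v" "v \<le> pre_eta G D \<eta> l y"
    by blast
  then show "integrable M (\<lambda>x. evl (last (ext h x)))" "(\<integral>x. evl (last (ext h x)) \<partial>M) \<le> \<eta> l y - \<epsilon>"
    using C4 by auto
qed

end


context ctx begin

lemma dsupp_closed: "closed (dsupp D)"
proof -
  have "open (- dsupp D)"
  proof (subst open_subopen, intro ballI)
    fix r assume "r \<in> - dsupp D"
    then obtain V where V: "open V" "r \<in> V" "\<not> emeasure D V > 0" by (auto simp: dsupp_def)
    have "V \<subseteq> - dsupp D" using V by (auto simp: dsupp_def)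
    then show "\<exists>T. open T \<and> r \<in> T \<and> T \<subseteq> - dsupp D" using V by blast
  qed
  then show ?thesis by (simp add: closed_def)
qed

lemma dsupp_sets: "dsupp D \<in> sets D"
  using dsupp_closed setsD by (simp add: borel_closed)

lemma AE_dsupp: "AE r in D. r \<in> dsupp D"
proof -
  obtain B :: "(real^'r) set set" where B: "countable B" "topological_basis B"
    using ex_countable_basis by blast
  have ob: "\<And>b. b \<in> B \<Longrightarrow> open b" using B(2) by (simp add: topological_basis_open)
  let ?N = "\<Union>b\<in>{b\<in>B. emeasure D b = 0}. b"
  have N: "?N \<in> null_sets D"
  proof (rule null_sets_UN')
    show "countable {b\<in>B. emeasure D b = 0}" using B(1) by simp
    fix b assume "b \<in> {b\<in>B. emeasure D b = 0}"
    then show "b \<in> null_sets D" using ob[of b] setsD by (auto simp: null_sets_def)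
  qed
  show ?thesis
  proof (rule AE_I'[OF N])
    show "{r \<in> space D. r \<notin> dsupp D} \<subseteq> ?N"
    proof
      fix r assume "r \<in> {r \<in> space D. r \<notin> dsupp D}"
      then obtain V where V: "open V" "r \<in> V" "\<not> emeasure D V > 0" by (auto simp: dsupp_def)
      obtain b where b: "b \<in> B" "r \<in> b" "b \<subseteq> V" using topological_basisE[OF B(2) V(1) V(2)] by blast
      have "emeasure D b \<le> emeasure D V"
        using b ob V(1) setsD by (intro emeasure_mono) auto
      then have "emeasure D b = 0" using V(3) by (simp add: zero_less_iff_neq_zero)
      then show "r \<in> ?N" using b by blast
    qed
  qed
qed

lemma good_meas: "Measurable.pred M good"
proof -
  have "{x \<in> space M. good x} = (fst -` dsupp D \<inter> space M) \<inter> (snd -` {0..<1} \<inter> space M)"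
    by (auto simp: good_def)
  also have "\<dots> \<in> sets M" unfolding step_space_def
    using dsupp_sets by (intro sets.Int measurable_sets[OF measurable_fst] measurable_sets[OF measurable_snd]) auto
  finally show ?thesis by (simp add: pred_def)
qed

lemma AE_good: "AE x in M. good x"
proof -
  have mf: "fst \<in> M \<rightarrow>\<^sub>M D" and ms: "snd \<in> M \<rightarrow>\<^sub>M U" unfolding step_space_def by simp_all
  have "AE r in distr M D fst. r \<in> dsupp D" by (subst distr_fst) (rule AE_dsupp)
  then have 1: "AE x in M. fst x \<in> dsupp D"
    by (subst (asm) AE_distr_iff[OF mf]) (use dsupp_sets spaceD in auto)
  have "AE u in U. u \<in> {0..<1}"
    by (rule AE_uniform_measureI) (auto intro: eventually_mono[OF AE_lborel_singleton[of 1]])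
  then have "AE u in distr M U snd. u \<in> {0..<1}" by (subst distr_snd)
  then have 2: "AE x in M. snd x \<in> {0..<1}"
    by (subst (asm) AE_distr_iff[OF ms]) auto
  show ?thesis using 1 2 by eventually_elim (simp add: good_def)
qed

lemma AE_good_stream: "AE \<omega> in S. \<forall>k. good (\<omega> !! k)"
proof -
  have "AE \<omega> in S. stream_all good \<omega>" unfolding run_space_def
    by (rule prob_space.AE_stream_all[OF probM good_meas AE_good])
  then show ?thesis by (rule eventually_mono) (unfold stream_all_def, blast)
qed

end


context ctx begin

abbreviation "cf \<omega> k \<equiv> cfg G \<sigma> \<pi> \<omega> k"

lemma measM_1[simp]: "measure M (space M) = 1" by (rule prob_space.prob_space[OF probM])

lemma m_fst: "(\<lambda>\<omega>. fst (cf \<omega> k)) \<in> S \<rightarrow>\<^sub>M count_space UNIV"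
  by (rule measurable_compose[OF meas[rule_format] measurable_fst])
lemma m_snd: "(\<lambda>\<omega>. snd (cf \<omega> k)) \<in> S \<rightarrow>\<^sub>M borel"
  by (rule measurable_compose[OF meas[rule_format] measurable_snd])

lemma m_evl: "(\<lambda>\<omega>. evl (cf \<omega> k)) \<in> S \<rightarrow>\<^sub>M borel"
proof -
  have "(\<lambda>\<omega>. \<eta> (fst (cf \<omega> k)) (snd (cf \<omega> k))) \<in> S \<rightarrow>\<^sub>M borel"
  proof (rule measurable_compose_countable'[where f="\<lambda>i \<omega>. \<eta> i (snd (cf \<omega> k))" and g="\<lambda>\<omega>. fst (cf \<omega> k)" and I=UNIV])
    fix i :: 'l assume "i \<in> UNIV"
    obtain a c where ac: "\<And>z. \<eta> i z = a \<bullet> z + c" using lrsm_aff[of i] by blast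
    have c: "(\<lambda>z::real^'x. a \<bullet> z + c) \<in> borel_measurable borel"
      by (intro borel_measurable_continuous_onI continuous_intros)
    show "(\<lambda>\<omega>. \<eta> i (snd (cf \<omega> k))) \<in> S \<rightarrow>\<^sub>M borel" unfolding ac
      by (rule measurable_compose[OF m_snd c])
  next
    show "(\<lambda>\<omega>. fst (cf \<omega> k)) \<in> S \<rightarrow>\<^sub>M count_space UNIV" by (rule m_fst)
  next
    show "countable (UNIV :: 'l set)" by (rule countable_finite) simp
  qed
  then show ?thesis by (simp add: evl_def)
qed

definition Z :: "nat \<Rightarrow> ((real^'r) \<times> real) stream \<Rightarrow> real" where
  "Z j \<omega> = evl (cf \<omega> (Suc (Suc j))) - evl (cf \<omega> (Suc j)) + (if fst (cf \<omega> (Suc j)) \<noteq> out_loc G then \<epsilon> else 0)"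

lemma m_Z: "Z j \<in> S \<rightarrow>\<^sub>M borel"
proof -
  define f where "f = (\<lambda>l. if l \<noteq> out_loc G then \<epsilon> else 0)"
  have f: "f \<in> count_space UNIV \<rightarrow>\<^sub>M borel" by (simp add: measurable_count_space_eq1)
  have h2: "(\<lambda>\<omega>. f (fst (cf \<omega> (Suc j)))) \<in> S \<rightarrow>\<^sub>M borel" by (rule measurable_compose[OF m_fst f])
  have eq: "Z j = (\<lambda>\<omega>. (evl (cf \<omega> (Suc (Suc j))) - evl (cf \<omega> (Suc j))) + f (fst (cf \<omega> (Suc j))))"
    by (simp add: Z_def f_def fun_eq_iff)
  have h1: "(\<lambda>\<omega>. evl (cf \<omega> (Suc (Suc j))) - evl (cf \<omega> (Suc j))) \<in> S \<rightarrow>\<^sub>M borel"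
    by (rule borel_measurable_diff[OF m_evl m_evl])
  show ?thesis unfolding eq by (rule borel_measurable_add[OF h1 h2])
qed

lemma m_shift: "(\<lambda>\<omega>. p @- \<omega>) \<in> S \<rightarrow>\<^sub>M S"
proof (induct p)
  case Nil then show ?case by simp
next
  case (Cons x p)
  have "(\<lambda>\<omega>. x ## (p @- \<omega>)) \<in> S \<rightarrow>\<^sub>M S" unfolding run_space_def
    using Cons[unfolded run_space_def] by (intro measurable_Stream) (auto simp: spaceM)
  then show ?case by simp
qed

lemma cf_hist: "cf \<omega> (Suc k) = last (hist G \<sigma> \<pi> \<omega> k)" by (simp add: cfg_def)

lemma Z_dep: "j < length p \<Longrightarrow> Z j (p @- \<omega>) = Z j (p @- \<omega>')"
  unfolding Z_def cf_hist using hist_prefix[of "Suc j" p \<omega> \<omega>'] hist_prefix[of j p \<omega> \<omega>'] by simp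

lemma Z_step: "Z (length p) (p @- (x ## \<omega>)) =
   (let h = hist G \<sigma> \<pi> (p @- \<omega>) (length p) in
     evl (last (ext h x)) - evl (last h) + (if fst (last h) \<noteq> out_loc G then \<epsilon> else 0))"
proof -
  have "hist G \<sigma> \<pi> (p @- (x ## \<omega>)) (length p) = hist G \<sigma> \<pi> (p @- \<omega>) (length p)"
    by (rule hist_prefix) simp
  moreover have "(p @- (x ## \<omega>)) !! length p = x" by simp
  ultimately show ?thesis unfolding Z_def cf_hist hist_Suc Let_def by simp
qed

lemma E_Z: assumes g: "list_all good p"
  shows "integrable M (\<lambda>x. Z (length p) (p @- (x ## \<omega>)))" "(\<integral>x. Z (length p) (p @- (x ## \<omega>)) \<partial>M) \<le> 0"
proof -
  define h where "h = hist G \<sigma> \<pi> (p @- \<omega>) (length p)"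
  have P: "is_path G D h" unfolding h_def
    by (rule path_hist) (use g in \<open>auto simp: list_all_length\<close>)
  have hne: "h \<noteq> []" using P by (simp add: is_path_def)
  obtain l y where ly: "last h = (l, y)" by (cases "last h")
  have Zs: "\<And>x. Z (length p) (p @- (x ## \<omega>)) = evl (last (ext h x)) - evl (last h) + (if l \<noteq> out_loc G then \<epsilon> else 0)"
    unfolding Z_step h_def[symmetric] Let_def ly by simp
  have "integrable M (\<lambda>x. Z (length p) (p @- (x ## \<omega>))) \<and> (\<integral>x. Z (length p) (p @- (x ## \<omega>)) \<partial>M) \<le> 0"
  proof (cases "l = out_loc G")
    case True
    have "\<And>x. Z (length p) (p @- (x ## \<omega>)) = 0" unfolding Zs using out_stay[OF hne] ly True by simp
    then show ?thesis using int_constM[of 0] by simp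
  next
    case False
    note se = step_exp[OF P ly False]
    have ev: "evl (last h) = \<eta> l y" by (simp add: ly evl_def)
    have i: "integrable M (\<lambda>x. evl (last (ext h x)) - evl (last h) + \<epsilon>)"
      using se(1) int_constM by auto
    have "(\<integral>x. evl (last (ext h x)) - evl (last h) + \<epsilon> \<partial>M) = (\<integral>x. evl (last (ext h x)) \<partial>M) - evl (last h) + \<epsilon>"
      using se(1) int_constM by (simp add: Bochner_Integration.integral_add Bochner_Integration.integral_diff)
    then show ?thesis unfolding Zs using i se(2) ev False by simp
  qed
  then show "integrable M (\<lambda>x. Z (length p) (p @- (x ## \<omega>)))" "(\<integral>x. Z (length p) (p @- (x ## \<omega>)) \<partial>M) \<le> 0"
    by auto
qed

end


context ctx begin

lemma S_eq: "S = stream_space M" by (simp add: run_space_def)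

lemma m_zs: "(\<lambda>\<omega>. Z k (q @- \<omega>)) \<in> borel_measurable S"
  by (rule measurable_compose[OF m_shift m_Z])

lemma m_sum: "(\<lambda>\<omega>. \<Sum>k<n. Z (length q + k) (q @- \<omega>)) \<in> borel_measurable S"
  by (rule borel_measurable_sum) (rule m_zs)

lemma m_expS: "f \<in> borel_measurable S \<Longrightarrow> (\<lambda>\<omega>. ennreal (exp (c * f \<omega>))) \<in> borel_measurable S"
proof -
  assume f: "f \<in> borel_measurable S"
  have "(\<lambda>\<omega>. c * f \<omega>) \<in> borel_measurable S" by (rule borel_measurable_times[OF borel_measurable_const f])
  then have "(\<lambda>\<omega>. exp (c * f \<omega>)) \<in> borel_measurable S" by (rule measurable_compose[OF _ borel_measurable_exp])
  then show ?thesis by (rule measurable_compose[OF _ measurable_ennreal])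
qed

lemma m_cons: "(\<lambda>x. q @- (x ## \<omega>)) \<in> M \<rightarrow>\<^sub>M S"
proof -
  have "(\<lambda>x. x ## \<omega>) \<in> M \<rightarrow>\<^sub>M stream_space M"
    by (rule measurable_Stream[OF measurable_id measurable_const]) (simp add: S_eq[symmetric] spaceS)
  then have "(\<lambda>x. x ## \<omega>) \<in> M \<rightarrow>\<^sub>M S" by (simp add: S_eq)
  then show ?thesis by (rule measurable_compose[OF _ m_shift])
qed

lemma pred_Q: "Measurable.pred S (\<lambda>\<omega>. \<forall>k\<in>{..<n}. Z (length q + k) (q @- \<omega>) \<in> {\<alpha>..\<beta>})"
  by (rule pred_intros_finite(3)) (simp, rule pred_sets2[OF _ m_zs], simp)

end


context ctx begin

lemma m_exp_gen: "f \<in> borel_measurable N \<Longrightarrow> (\<lambda>\<omega>. ennreal (exp (c * f \<omega>))) \<in> borel_measurable N"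
proof -
  assume f: "f \<in> borel_measurable N"
  have "(\<lambda>\<omega>. c * f \<omega>) \<in> borel_measurable N" by (rule borel_measurable_times[OF borel_measurable_const f])
  then have "(\<lambda>\<omega>. exp (c * f \<omega>)) \<in> borel_measurable N" by (rule measurable_compose[OF _ borel_measurable_exp])
  then show ?thesis by (rule measurable_compose[OF _ measurable_ennreal])
qed

lemma Z_first: "Z (length p) (p @- (x ## \<omega>)) = Z (length p) (p @- (x ## undefined))"
  using Z_dep[of "length p" "p @ [x]" \<omega> undefined] by simp

lemma Z_split: "(\<Sum>k<Suc N. Z (length p + k) (p @- (x ## \<omega>))) =
   Z (length p) (p @- (x ## undefined)) + (\<Sum>k<N. Z (length (p @ [x]) + k) ((p @ [x]) @- \<omega>))"
proof -
  have a: "Z (length p) (p @- (x ## \<omega>)) = Z (length p) (p @- (x ## undefined))"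
    using Z_dep[of "length p" "p @ [x]" \<omega> undefined] by simp
  have b: "\<And>k. Z (length p + Suc k) (p @- (x ## \<omega>)) = Z (length (p @ [x]) + k) ((p @ [x]) @- \<omega>)"
    by simp
  show ?thesis unfolding sum.lessThan_Suc_shift using a b by simp
qed

lemma core:
  fixes \<alpha> \<beta> lm :: real
  assumes lam: "lm > 0"
  shows "list_all good p \<Longrightarrow> (AE \<omega> in S. \<forall>k\<in>{..<N}. Z (length p + k) (p @- \<omega>) \<in> {\<alpha>..\<beta>}) \<Longrightarrow>
    (\<integral>\<^sup>+\<omega>. ennreal (exp (lm * (\<Sum>k<N. Z (length p + k) (p @- \<omega>)))) \<partial>S)
      \<le> ennreal (exp (real N * (lm\<^sup>2 * (\<beta> - \<alpha>)\<^sup>2 / 8)))"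
proof (induct N arbitrary: p)
  case 0
  show ?case using prob_space.emeasure_space_1[OF probS] by simp
next
  case (Suc N p)
  define w where "w = lm\<^sup>2 * (\<beta> - \<alpha>)\<^sup>2 / 8"
  define zf where "zf x = Z (length p) (p @- (x ## undefined))" for x
  define C where "C = ennreal (exp (real N * w))"
  let ?F = "\<lambda>q n \<omega>. ennreal (exp (lm * (\<Sum>k<n. Z (length q + k) (q @- \<omega>))))"
  have mF0: "?F p (Suc N) \<in> borel_measurable S" by (rule m_expS[OF m_sum])
  have mF: "?F p (Suc N) \<in> borel_measurable (stream_space M)" using mF0 unfolding S_eq .
  have eq1: "(\<integral>\<^sup>+\<omega>. ?F p (Suc N) \<omega> \<partial>S) = (\<integral>\<^sup>+x. (\<integral>\<^sup>+\<omega>. ?F p (Suc N) (x ## \<omega>) \<partial>S) \<partial>M)"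
    unfolding S_eq by (rule prob_space.nn_integral_stream_space[OF probM mF])
  have eq2: "(\<integral>\<^sup>+\<omega>. ?F p (Suc N) (x ## \<omega>) \<partial>S) = ennreal (exp (lm * zf x)) * (\<integral>\<^sup>+\<omega>. ?F (p @ [x]) N \<omega> \<partial>S)" for x
  proof -
    have pw: "\<And>\<omega>. ?F p (Suc N) (x ## \<omega>) = ennreal (exp (lm * zf x)) * ?F (p @ [x]) N \<omega>"
      unfolding Z_split zf_def by (simp add: distrib_left exp_add ennreal_mult)
    have "(\<integral>\<^sup>+\<omega>. ?F p (Suc N) (x ## \<omega>) \<partial>S) = (\<integral>\<^sup>+\<omega>. ennreal (exp (lm * zf x)) * ?F (p @ [x]) N \<omega> \<partial>S)"
      by (rule nn_integral_cong) (rule pw)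
    also have "\<dots> = ennreal (exp (lm * zf x)) * (\<integral>\<^sup>+\<omega>. ?F (p @ [x]) N \<omega> \<partial>S)"
      by (rule nn_integral_cmult) (rule m_expS[OF m_sum])
    finally show ?thesis .
  qed
  have Q: "AE x in M. AE \<omega> in S. \<forall>k\<in>{..<Suc N}. Z (length p + k) (p @- (x ## \<omega>)) \<in> {\<alpha>..\<beta>}"
    using Suc.prems(2) unfolding S_eq
    by (subst (asm) prob_space.AE_stream_space[OF probM]) (use pred_Q[unfolded S_eq] in auto)
  have AEr: "AE x in M. zf x \<in> {\<alpha>..\<beta>}"
  proof -
    have "AE x in M. AE \<omega> in S. zf x \<in> {\<alpha>..\<beta>}"
      using Q
    proof eventually_elim
      case (elim x)
      show ?case using elim
      proof eventually_elim
        case (elim \<omega>)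
        then have "Z (length p + 0) (p @- (x ## \<omega>)) \<in> {\<alpha>..\<beta>}" by blast
        then show ?case unfolding zf_def using Z_first[of p x \<omega>] by simp
      qed
    qed
    then show ?thesis using prob_space.AE_const[OF probS] by simp
  qed
  have AEi: "AE x in M. (\<integral>\<^sup>+\<omega>. ?F (p @ [x]) N \<omega> \<partial>S) \<le> C"
    using Q AE_good
  proof eventually_elim
    case (elim x)
    have "AE \<omega> in S. \<forall>k\<in>{..<N}. Z (length (p @ [x]) + k) ((p @ [x]) @- \<omega>) \<in> {\<alpha>..\<beta>}"
      using elim(1)
    proof eventually_elim
      case (elim \<omega>)
      show ?case
      proof
        fix k assume "k \<in> {..<N}"
        then have "Suc k \<in> {..<Suc N}" by simp
        then have "Z (length p + Suc k) (p @- (x ## \<omega>)) \<in> {\<alpha>..\<beta>}" using elim by blast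
        then show "Z (length (p @ [x]) + k) ((p @ [x]) @- \<omega>) \<in> {\<alpha>..\<beta>}" by simp
      qed
    qed
    moreover have "list_all good (p @ [x])" using Suc.prems(1) elim(2) by simp
    ultimately show ?case using Suc.hyps unfolding C_def w_def by blast
  qed
  have mzf: "zf \<in> borel_measurable M" unfolding zf_def by (rule measurable_compose[OF m_cons m_Z])
  interpret H: interval_bounded_random_variable M zf \<alpha> \<beta>
    by (rule interval_bounded_random_variable.intro[OF probM], unfold_locales) (use mzf AEr in auto)
  have Ez: "(\<integral>x. zf x \<partial>M) \<le> 0" unfolding zf_def by (rule E_Z(2)[OF Suc.prems(1)])
  have hoe: "(\<integral>\<^sup>+x. ennreal (exp (lm * zf x)) \<partial>M) \<le> ennreal (exp w)"
  proof -
    have "(\<integral>\<^sup>+x. ennreal (exp (lm * zf x)) \<partial>M) \<le> (\<integral>\<^sup>+x. ennreal (exp (lm * (zf x - (\<integral>x. zf x \<partial>M)))) \<partial>M)"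
      using Ez lam by (intro nn_integral_mono ennreal_leI) (simp add: algebra_simps mult_nonneg_nonpos)
    also have "\<dots> \<le> ennreal (exp w)" unfolding w_def by (rule H.Hoeffdings_lemma_nn_integral[OF lam])
    finally show ?thesis .
  qed
  have "(\<integral>\<^sup>+\<omega>. ?F p (Suc N) \<omega> \<partial>S) = (\<integral>\<^sup>+x. ennreal (exp (lm * zf x)) * (\<integral>\<^sup>+\<omega>. ?F (p @ [x]) N \<omega> \<partial>S) \<partial>M)"
    unfolding eq1 eq2 ..
  also have "\<dots> \<le> (\<integral>\<^sup>+x. ennreal (exp (lm * zf x)) * C \<partial>M)"
    using AEi by (intro nn_integral_mono_AE) (auto elim!: eventually_mono intro: mult_left_mono)
  also have "\<dots> = (\<integral>\<^sup>+x. ennreal (exp (lm * zf x)) \<partial>M) * C"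
    by (rule nn_integral_multc) (rule m_exp_gen[OF mzf])
  also have "\<dots> \<le> ennreal (exp w) * C" using hoe by (rule mult_right_mono) simp
  also have "\<dots> = ennreal (exp (real (Suc N) * w))"
    unfolding C_def by (simp add: ennreal_mult[symmetric] exp_add[symmetric] algebra_simps)
  finally show ?case unfolding w_def .
qed

end


context ctx begin

lemma cf_out: "fst (cf \<omega> (Suc k)) = out_loc G \<Longrightarrow> cf \<omega> (Suc (Suc k)) = cf \<omega> (Suc k)"
proof -
  assume o: "fst (cf \<omega> (Suc k)) = out_loc G"
  have ne: "hist G \<sigma> \<pi> \<omega> k \<noteq> []" using length_hist[of \<omega> k] by auto
  show ?thesis unfolding cf_hist hist_Suc using out_stay[OF ne] o cf_hist by simp
qed

lemma range_AE:
  assumes ab: "a \<le> -\<epsilon>" "-\<epsilon> \<le> b"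
    and H: "\<forall>k\<ge>1. AE \<omega> in S. a \<le> evl (cf \<omega> (Suc k)) - evl (cf \<omega> k) \<and> evl (cf \<omega> (Suc k)) - evl (cf \<omega> k) \<le> b"
  shows "AE \<omega> in S. \<forall>k\<in>{..<N}. Z k \<omega> \<in> {a + \<epsilon>..b + \<epsilon>}"
proof -
  have "\<forall>k. AE \<omega> in S. k \<ge> 1 \<longrightarrow> a \<le> evl (cf \<omega> (Suc k)) - evl (cf \<omega> k) \<and> evl (cf \<omega> (Suc k)) - evl (cf \<omega> k) \<le> b"
  proof
    fix k :: nat show "AE \<omega> in S. k \<ge> 1 \<longrightarrow> a \<le> evl (cf \<omega> (Suc k)) - evl (cf \<omega> k) \<and> evl (cf \<omega> (Suc k)) - evl (cf \<omega> k) \<le> b"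
      using H by (cases "k \<ge> 1") auto
  qed
  then have "AE \<omega> in S. \<forall>k. k \<ge> 1 \<longrightarrow> a \<le> evl (cf \<omega> (Suc k)) - evl (cf \<omega> k) \<and> evl (cf \<omega> (Suc k)) - evl (cf \<omega> k) \<le> b"
    by (simp add: AE_all_countable)
  then show ?thesis
  proof eventually_elim
    case (elim \<omega>)
    show ?case
    proof
      fix k assume "k \<in> {..<N}"
      show "Z k \<omega> \<in> {a + \<epsilon>..b + \<epsilon>}"
      proof (cases "fst (cf \<omega> (Suc k)) = out_loc G")
        case True
        then show ?thesis using cf_out[OF True] ab by (simp add: Z_def)
      next
        case False
        have "a \<le> evl (cf \<omega> (Suc (Suc k))) - evl (cf \<omega> (Suc k)) \<and> evl (cf \<omega> (Suc (Suc k))) - evl (cf \<omega> (Suc k)) \<le> b"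
          using elim[rule_format, of "Suc k"] by simp
        then show ?thesis using False by (simp add: Z_def)
      qed
    qed
  qed
qed

lemma sum_Z:
  assumes P: "\<forall>m. is_path G D (hist G \<sigma> \<pi> \<omega> m)"
    and nout: "\<forall>m. 1 \<le> m \<and> m \<le> Suc N \<longrightarrow> fst (cf \<omega> m) \<noteq> out_loc G"
  shows "(\<Sum>k<N. Z k \<omega>) \<ge> real N * \<epsilon> - \<eta> (init_loc G) (init_val G)"
proof -
  define g where "g i = evl (cf \<omega> (Suc i))" for i
  have "(\<Sum>k<N. Z k \<omega>) = (\<Sum>k<N. (g (Suc k) - g k) + \<epsilon>)"
    using nout by (intro sum.cong) (auto simp: Z_def g_def)
  also have "\<dots> = g N - g 0 + real N * \<epsilon>"
    by (simp add: sum.distrib sum_lessThan_telescope)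
  finally have s: "(\<Sum>k<N. Z k \<omega>) = g N - g 0 + real N * \<epsilon>" .
  have g0: "g 0 = \<eta> (init_loc G) (init_val G)" by (simp add: g_def cf_hist evl_def)
  obtain l y where ly: "cf \<omega> (Suc N) = (l, y)" by (cases "cf \<omega> (Suc N)")
  have "l \<noteq> out_loc G" using nout[rule_format, of "Suc N"] ly by simp
  moreover have "inv_sat I l y" using path_inv[OF P[rule_format, of N]] ly cf_hist by simp
  ultimately have "g N \<ge> 0" using lrsm_C2 ly by (simp add: g_def evl_def)
  then show ?thesis using s g0 by simp
qed

end



theorem mainTheorem10:
  fixes G :: "('l::finite, 'x::finite, 'r::finite) sgs"
    and D :: "(real^'r) measure"
    and I :: "'l \<Rightarrow> 'x lassert list"
    and \<eta> :: "'l \<Rightarrow> real^'x \<Rightarrow> real"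
    and \<epsilon> K K' a b :: real
    and \<sigma> \<pi> :: "('l, 'x) config list \<Rightarrow> nat"
    and n :: int
  assumes "wf_sgs G" and "rv_dist D"
    and "linear_invariant G D I"
    and "is_lrsm G D I \<eta> \<epsilon> K K'"
    and "scheduler G Angelic \<sigma>" and "greedy G D \<eta> \<sigma>"
    and "scheduler G Demonic \<pi>"
    and "\<forall>k. (\<lambda>\<omega>. cfg G \<sigma> \<pi> \<omega> k) \<in> run_space D \<rightarrow>\<^sub>M (count_space UNIV \<Otimes>\<^sub>M borel)"
    and "a < b" and "a \<le> -\<epsilon>" and "-\<epsilon> \<le> b"
    and "\<forall>k\<ge>1. AE \<omega> in run_space D.
           a \<le> \<eta> (fst (cfg G \<sigma> \<pi> \<omega> (Suc k))) (snd (cfg G \<sigma> \<pi> \<omega> (Suc k)))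
                - \<eta> (fst (cfg G \<sigma> \<pi> \<omega> k)) (snd (cfg G \<sigma> \<pi> \<omega> k))
         \<and> \<eta> (fst (cfg G \<sigma> \<pi> \<omega> (Suc k))) (snd (cfg G \<sigma> \<pi> \<omega> (Suc k)))
                - \<eta> (fst (cfg G \<sigma> \<pi> \<omega> k)) (snd (cfg G \<sigma> \<pi> \<omega> k)) \<le> b"
    and "real_of_int n > \<eta> (init_loc G) (init_val G) / \<epsilon> + 1"
  shows "measure (run_space D)
           {\<omega> \<in> space (run_space D). ereal (real_of_int n) < ereal_of_enat (term_time G \<sigma> \<pi> \<omega>)}
         \<le> exp (- (2 * (\<epsilon> * (real_of_int n - 1) - \<eta> (init_loc G) (init_val G))\<^sup>2)
                 / ((real_of_int n - 1) * (b - a)\<^sup>2))"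
proof -
  interpret C: ctx G D I \<eta> \<epsilon> K K' \<sigma> \<pi>
    by (unfold_locales) (use assms in auto)
  interpret PS: prob_space "run_space D" by (rule C.probS)
  define W0 where "W0 = \<eta> (init_loc G) (init_val G)"
  define A where "A = {\<omega> \<in> space (run_space D). ereal (real_of_int n) < ereal_of_enat (term_time G \<sigma> \<pi> \<omega>)}"
  define R where "R = exp (- (2 * (\<epsilon> * (real_of_int n - 1) - W0)\<^sup>2) / ((real_of_int n - 1) * (b - a)\<^sup>2))"
  have eps: "\<epsilon> \<ge> 1" by (rule C.lrsm_eps)
  show ?thesis unfolding A_def[symmetric] W0_def[symmetric] R_def[symmetric]
  proof (cases "n \<le> 1")
    case True
    have "0 \<le> - (2 * (\<epsilon> * (real_of_int n - 1) - W0)\<^sup>2) / ((real_of_int n - 1) * (b - a)\<^sup>2)"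
      using True by (intro divide_nonpos_nonpos) (auto intro!: mult_nonpos_nonneg)
    then have "1 \<le> R" unfolding R_def by simp
    then show "measure (run_space D) A \<le> R" using PS.prob_le_1[of A] by linarith
  next
    case False
    define N where "N = nat (n - 1)"
    have N1: "N \<ge> 1" and rN: "real N = real_of_int n - 1" using False by (auto simp: N_def)
    define t where "t = \<epsilon> * real N - W0"
    have tpos: "t > 0"
    proof -
      have "W0 / \<epsilon> < real N" using assms(13) rN by (simp add: W0_def)
      then show ?thesis using eps by (simp add: t_def divide_less_eq mult.commute)
    qed
    define w where "w = (b - a)\<^sup>2"
    have wpos: "w > 0" using assms(9) by (simp add: w_def)
    define lm where "lm = 4 * t / (real N * w)"
    have lmpos: "lm > 0" using tpos wpos N1 by (simp add: lm_def)
    let ?s = "\<lambda>\<omega>. \<Sum>k<N. C.Z k \<omega>"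
    define B where "B = {\<omega> \<in> space (run_space D). t \<le> ?s \<omega>}"
    have ms: "?s \<in> borel_measurable (run_space D)" using C.m_sum[where n=N and q="[]"] by simp
    have "?s -` {t..} \<inter> space (run_space D) \<in> sets (run_space D)" by (rule measurable_sets[OF ms]) simp
    moreover have "B = ?s -` {t..} \<inter> space (run_space D)" by (auto simp: B_def)
    ultimately have Bs: "B \<in> sets (run_space D)" by simp
    have AEg: "AE \<omega> in run_space D. \<forall>m. is_path G D (hist G \<sigma> \<pi> \<omega> m)"
      using C.AE_good_stream by eventually_elim (auto intro: C.path_hist)
    have H: "\<forall>k\<ge>1. AE \<omega> in run_space D. a \<le> C.evl (cfg G \<sigma> \<pi> \<omega> (Suc k)) - C.evl (cfg G \<sigma> \<pi> \<omega> k) \<and> C.evl (cfg G \<sigma> \<pi> \<omega> (Suc k)) - C.evl (cfg G \<sigma> \<pi> \<omega> k) \<le> b"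
      using assms(12) unfolding C.evl_def .
    have AEr: "AE \<omega> in run_space D. \<forall>k\<in>{..<N}. C.Z k \<omega> \<in> {a + \<epsilon>..b + \<epsilon>}"
      by (rule C.range_AE[OF assms(10,11) H])
    have core: "(\<integral>\<^sup>+\<omega>. ennreal (exp (lm * ?s \<omega>)) \<partial>run_space D) \<le> ennreal (exp (real N * (lm\<^sup>2 * w / 8)))"
      using C.core[OF lmpos, of "[]" N "a + \<epsilon>" "b + \<epsilon>"] AEr by (simp add: w_def)
    have Tn: "fst (cfg G \<sigma> \<pi> \<omega> m) \<noteq> out_loc G"
      if T: "ereal (real_of_int n) < ereal_of_enat (term_time G \<sigma> \<pi> \<omega>)" and m: "1 \<le> m" "m \<le> Suc N" for \<omega> m
    proof
      assume o: "fst (cfg G \<sigma> \<pi> \<omega> m) = out_loc G"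
      then have ex: "\<exists>n\<ge>1. fst (cfg G \<sigma> \<pi> \<omega> n) = out_loc G" using m by blast
      define L where "L = (LEAST n. n \<ge> 1 \<and> fst (cfg G \<sigma> \<pi> \<omega> n) = out_loc G)"
      have "L \<le> m" unfolding L_def by (rule Least_le) (use m o in simp)
      moreover have "term_time G \<sigma> \<pi> \<omega> = enat L" using ex by (simp add: term_time_def L_def)
      ultimately have "real_of_int n < real m" using T by simp
      then show False using m rN by simp
    qed
    have incl: "AE \<omega> in run_space D. \<omega> \<in> A \<longrightarrow> \<omega> \<in> B"
      using AEg
    proof eventually_elim
      case (elim \<omega>)
      show ?case
      proof
        assume "\<omega> \<in> A"
        then have "\<forall>m. 1 \<le> m \<and> m \<le> Suc N \<longrightarrow> fst (cfg G \<sigma> \<pi> \<omega> m) \<noteq> out_loc G"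
          using Tn by (auto simp: A_def)
        then have "t \<le> ?s \<omega>" using C.sum_Z[OF elim] by (simp add: t_def mult.commute W0_def)
        then show "\<omega> \<in> B" by (simp add: B_def C.spaceS)
      qed
    qed
    have "emeasure (run_space D) A \<le> emeasure (run_space D) B" by (rule emeasure_mono_AE[OF incl Bs])
    also have "\<dots> = (\<integral>\<^sup>+\<omega>. indicator B \<omega> \<partial>run_space D)" using Bs by simp
    also have "\<dots> \<le> (\<integral>\<^sup>+\<omega>. ennreal (exp (- lm * t)) * ennreal (exp (lm * ?s \<omega>)) \<partial>run_space D)"
    proof (rule nn_integral_mono)
      fix \<omega> show "indicator B \<omega> \<le> ennreal (exp (- lm * t)) * ennreal (exp (lm * ?s \<omega>))"
      proof (cases "\<omega> \<in> B")
        case True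
        then have "0 \<le> lm * (?s \<omega> - t)" using lmpos by (simp add: B_def)
        then have "1 \<le> exp (- lm * t) * exp (lm * ?s \<omega>)" by (simp add: exp_add[symmetric] algebra_simps)
        then show ?thesis using True by (simp add: ennreal_mult[symmetric])
      qed simp
    qed
    also have "\<dots> = ennreal (exp (- lm * t)) * (\<integral>\<^sup>+\<omega>. ennreal (exp (lm * ?s \<omega>)) \<partial>run_space D)"
      by (rule nn_integral_cmult) (rule C.m_exp_gen[OF ms])
    also have "\<dots> \<le> ennreal (exp (- lm * t)) * ennreal (exp (real N * (lm\<^sup>2 * w / 8)))"
      by (rule mult_left_mono[OF core]) simp
    also have "\<dots> = ennreal (exp (- lm * t) * exp (real N * (lm\<^sup>2 * w / 8)))"
      by (rule ennreal_mult[symmetric]) simp_all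
    also have "\<dots> = ennreal (exp (- lm * t + real N * (lm\<^sup>2 * w / 8)))"
      by (simp only: mult_exp_exp)
    also have "- lm * t + real N * (lm\<^sup>2 * w / 8) = - (2 * t\<^sup>2) / (real N * w)"
      using N1 wpos unfolding lm_def by (simp add: field_simps power2_eq_square)
    also have "exp (- (2 * t\<^sup>2) / (real N * w)) = R"
      unfolding R_def t_def w_def rN by (simp add: mult.commute)
    finally have "emeasure (run_space D) A \<le> ennreal R" .
    moreover have "R \<ge> 0" by (simp add: R_def)
    ultimately show "measure (run_space D) A \<le> R"
      by (simp add: PS.emeasure_eq_measure ennreal_le_iff)
  qed
qed


end
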